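(* For $0<q<1$ and every integer $k\ge1$, \[ \frac{q^k\prod_{n=1}^{k}(q^{2n}+q^{2k})}{\prod_{n=0}^{k}(1-q^{2n+2k})} = -\,\frac{q^k\,(-q^2;q^2)_k}{(q^{2k}-1)\,(q^2;q^2)_k}\; {}_3\phi_2\!\left(\begin{matrix}-q^{2k+2},\,q^{2k},\,q^{-2k}\\ -q^2,\,q^{2k+2}\end{matrix};q^2,\,q^2\right). \]
   Context: $(a;q)_n=\prod_{i=0}^{n-1}(1-aq^i)$ with $(a;q)_0=1$. Here ${}_3\phi_2\!\left(\begin{smallmatrix}a_1,a_2,a_3\\ b_1,b_2\end{smallmatrix};p,z\right)=\sum_{i\ge0}\frac{(a_1;p)_i(a_2;p)_i(a_3;p)_i}{(b_1;p)_i(b_2;p)_i(p;p)_i}z^i$; with $a_3=q^{-2k}$ and $p=q^2$ the sum terminates at $i=k$. *)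

theory Defs
  imports Complex_Main
begin

definition qpoch :: "real \<Rightarrow> real \<Rightarrow> nat \<Rightarrow> real" where
  "qpoch a q n = (\<Prod>i<n. (1 - a * q ^ i))"

definition phi32 :: "real \<Rightarrow> real \<Rightarrow> real \<Rightarrow> real \<Rightarrow> real \<Rightarrow> real \<Rightarrow> real \<Rightarrow> real" where
  "phi32 a1 a2 a3 b1 b2 p z =
     (\<Sum>i. qpoch a1 p i * qpoch a2 p i * qpoch a3 p i
           / (qpoch b1 p i * qpoch b2 p i * qpoch p p i) * z ^ i)"

end

theory Submission imports Defs "HOL-Computational_Algebra.Polynomial" begin

lemma qpoch_add: "qpoch a x (m+n) = qpoch a x m * qpoch (a*x^m) x n"
  by (induction n) (auto simp: qpoch_def power_add mult.assoc algebra_simps)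

lemma qpoch_ratio: "qpoch a x i * (1 - a * x^i) = qpoch (a*x) x i * (1 - a)"
proof (induction i)
  case 0 then show ?case by (simp add: qpoch_def)
next
  case (Suc i)
  have "qpoch a x (Suc i) * (1 - a * x^Suc i) = (qpoch a x i * (1 - a * x^i)) * (1 - a*x^Suc i)"
    by (simp add: qpoch_def)
  also have "\<dots> = qpoch (a*x) x i * (1 - a) * (1 - a*x*x^i)" using Suc by (simp add: mult.assoc)
  also have "\<dots> = qpoch (a*x) x (Suc i) * (1 - a)" by (simp add: qpoch_def)
  finally show ?case .
qed

lemma qpoch_pos: fixes x :: real assumes "0<x" "x<1" "\<bar>a\<bar> < 1" shows "qpoch a x i > 0"
  unfolding qpoch_def
proof (intro prod_pos ballI)
  fix j assume "j \<in> {..<i}"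
  have "\<bar>a * x^j\<bar> \<le> \<bar>a\<bar>" using assms by (simp add: abs_mult mult_left_le power_le_one)
  thus "0 < 1 - a * x^j" using assms by linarith
qed

lemma L2: fixes x :: real assumes "0<x"
  shows "(\<Prod>n=1..k. (x^n + 1/x^i)) * x^(i*k) = qpoch (-(x^(i+1))) x k"
proof (induction k)
  case 0 then show ?case by (simp add: qpoch_def)
next
  case (Suc k)
  have "(\<Prod>n=1..Suc k. (x^n + 1/x^i)) * x^(i*Suc k) = ((\<Prod>n=1..k. (x^n + 1/x^i)) * x^(i*k)) * ((x^Suc k + 1/x^i) * x^i)"
    by (simp add: prod.nat_ivl_Suc' power_add algebra_simps)
  also have "\<dots> = qpoch (-(x^(i+1))) x k * (1 + x^(k+i+1))" using Suc assms
    by (simp add: field_simps power_add)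
  finally show ?case by (simp add: qpoch_def power_add algebra_simps)
qed

definition W :: "real \<Rightarrow> nat \<Rightarrow> real" where "W x i = (\<Prod>m<i. x^(m+1))"

lemma part1: fixes x :: real assumes "0<x"
  shows "(\<Prod>n<i. (1 - 1/x^i * x^n)) * W x i = (-1)^i * qpoch x x i"
proof -
  have "(\<Prod>n<i. (1 - 1/x^i * x^n)) = (\<Prod>m<i. (1 - 1/x^i * x^(i - Suc m)))"
    by (rule prod.reindex_bij_witness[where i="\<lambda>m. i - Suc m" and j="\<lambda>m. i - Suc m"]) auto
  also have "\<dots> = (\<Prod>m<i. (1 - 1/x^(m+1)))"
  proof (rule prod.cong)
    fix m assume "m \<in> {..<i}"
    hence "x^i = x^((i - Suc m) + (m+1))" by simp
    hence "x^i = x^(i - Suc m) * x^(m+1)" by (simp only: power_add)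
    thus "1 - 1/x^i * x^(i - Suc m) = 1 - 1/x^(m+1)" using assms by (simp add: field_simps)
  qed simp
  finally have "(\<Prod>n<i. (1 - 1/x^i * x^n)) * W x i = (\<Prod>m<i. (1 - 1/x^(m+1)) * x^(m+1))"
    by (simp add: W_def prod.distrib)
  also have "\<dots> = (\<Prod>m<i. (-1) * (1 - x * x^m))"
    by (rule prod.cong) (use assms in \<open>auto simp: field_simps\<close>)
  also have "\<dots> = (\<Prod>m<i. (-1::real)) * (\<Prod>m<i. (1 - x*x^m))" by (rule prod.distrib)
  also have "\<dots> = (-1)^i * qpoch x x i" by (simp add: qpoch_def)
  finally show ?thesis .
qed

lemma part2: fixes x :: real assumes "0<x" "i \<le> k"
  shows "(\<Prod>n\<in>{i+1..k}. (1 - 1/x^i * x^n)) = qpoch x x (k-i)"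
proof -
  have "(\<Prod>n\<in>{i+1..k}. (1 - 1/x^i * x^n)) = (\<Prod>m<k-i. (1 - 1/x^i * x^(m+i+1)))"
    by (rule prod.reindex_bij_witness[where i="\<lambda>m. m+i+1" and j="\<lambda>n. n-i-1"]) auto
  also have "\<dots> = qpoch x x (k-i)" unfolding qpoch_def
    by (rule prod.cong) (use assms in \<open>auto simp: field_simps power_add\<close>)
  finally show ?thesis .
qed

lemma Dform: fixes x :: real assumes "0<x" "i \<le> k"
  shows "(\<Prod>n\<in>{0..k}-{i}. (1 - 1/x^i * x^n)) * W x i = (-1)^i * qpoch x x i * qpoch x x (k-i)"
proof -
  have eq: "{0..k}-{i} = {..<i} \<union> {i+1..k}" using assms by auto
  have "(\<Prod>n\<in>{0..k}-{i}. (1 - 1/x^i * x^n)) = (\<Prod>n<i. (1 - 1/x^i * x^n)) * (\<Prod>n\<in>{i+1..k}. (1 - 1/x^i * x^n))"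
    unfolding eq by (rule prod.union_disjoint) auto
  hence "(\<Prod>n\<in>{0..k}-{i}. (1 - 1/x^i * x^n)) * W x i = ((\<Prod>n<i. (1 - 1/x^i * x^n)) * W x i) * (\<Prod>n\<in>{i+1..k}. (1 - 1/x^i * x^n))"
    by (simp only: ac_simps)
  also have "\<dots> = (-1)^i * qpoch x x i * qpoch x x (k-i)"
    unfolding part1[OF assms(1), of i] part2[OF assms] ..
  finally show ?thesis .
qed

lemma aux: fixes A B D E F C y x :: real
  assumes "(1-y)*C = -(D*F)"
  shows "A*B*D*E*x*((1-y)*C) = (A*B*D*(E*F))*(-(D*x))"
  unfolding assms by (simp add: mult_ac)

lemma Eform: fixes x :: real assumes "0<x" "i \<le> k"
  shows "qpoch (1/x^k) x i * x^(i*k) * x^i * qpoch x x (k-i) = (-1)^i * qpoch x x k * W x i"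
  using assms(2)
proof (induction i)
  case 0 then show ?case by (simp add: qpoch_def W_def)
next
  case (Suc i)
  define d where "d = k - Suc i"
  have kd: "k = i + 1 + d" using Suc d_def by simp
  have kid: "k - i = Suc d" using kd by simp
  have IH: "qpoch (1/x^k) x i * x^(i*k) * x^i * (qpoch x x d * (1 - x*x^d)) = (-1)^i * qpoch x x k * W x i"
    using Suc kid by (simp add: qpoch_def)
  have e: "(1 - 1/x^k * x^i) * x^k = - (x^i * (1 - x*x^d))" using assms(1) kd
    by (simp add: field_simps power_add)
  have q1: "qpoch (1/x^k) x (Suc i) = qpoch (1/x^k) x i * (1 - 1/x^k * x^i)" by (simp add: qpoch_def)
  have q2: "x^(Suc i*k) = x^(i*k)*x^k" by (simp add: power_add)
  have q3: "x^(i+1) = x^i * x" by simp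
  have "qpoch (1/x^k) x (Suc i) * x^(Suc i*k) * x^Suc i * qpoch x x (k - Suc i)
      = qpoch (1/x^k) x i * x^(i*k) * x^i * qpoch x x d * x * ((1 - 1/x^k * x^i) * x^k)"
    unfolding q1 q2 d_def[symmetric] power_Suc2 by (simp only: ac_simps)
  also have "\<dots> = (qpoch (1/x^k) x i * x^(i*k) * x^i * (qpoch x x d * (1 - x*x^d))) * (-(x^i*x))"
    by (rule aux[OF e])
  also have "\<dots> = (-1)^Suc i * qpoch x x k * W x (Suc i)" unfolding IH by (simp add: W_def)
  finally show ?case .
qed

lemma pow_inj: fixes x :: real assumes "0<x" "x<1" "x^i = x^j" shows "i = j"
proof -
  have "(1/x)^i = (1/x)^j" using assms by (simp add: power_one_over)
  moreover have "1 < 1/x" using assms by simp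
  ultimately show ?thesis using power_inject_exp by blast
qed

lemma interp:
  fixes x :: real and c :: "nat \<Rightarrow> real"
  assumes x: "0<x" "x<1"
    and hc: "\<And>j. j \<le> k \<Longrightarrow> c j * (\<Prod>n\<in>{0..k}-{j}. (1 - 1/x^j * x^n)) = (\<Prod>n=1..k. (x^n + 1/x^j))"
  shows "(\<Sum>i\<le>k. c i * (\<Prod>n\<in>{0..k}-{i}. (1 - b * x^n))) = (\<Prod>n=1..k. (x^n + b))"
proof -
  define p where "p = (\<Sum>i\<le>k. smult (c i) (\<Prod>n\<in>{0..k}-{i}. [:1, - (x^n):]))"
  define r where "r = (\<Prod>n\<in>{1..k}. [:x^n, 1:])"
  have pe: "poly p y = (\<Sum>i\<le>k. c i * (\<Prod>n\<in>{0..k}-{i}. (1 - y * x^n)))" for y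
    by (simp add: p_def poly_sum poly_prod algebra_simps)
  have re: "poly r y = (\<Prod>n=1..k. (x^n + y))" for y by (simp add: r_def poly_prod)
  have degp: "degree p \<le> k" unfolding p_def
  proof (rule degree_sum_le)
    fix i assume "i \<in> {..k}"
    have "degree (smult (c i) (\<Prod>n\<in>{0..k}-{i}. [:1, - (x^n):])) \<le> degree (\<Prod>n\<in>{0..k}-{i}. [:1, - (x^n):])"
      by (rule degree_smult_le)
    also have "\<dots> \<le> sum (degree \<circ> (\<lambda>n. [:1, - (x^n):])) ({0..k}-{i})" by (rule degree_prod_sum_le) simp
    also have "\<dots> \<le> sum (\<lambda>n. 1) ({0..k}-{i})" by (rule sum_mono) simp
    also have "\<dots> \<le> k" using \<open>i \<in> {..k}\<close> by simp
    finally show "degree (smult (c i) (\<Prod>n\<in>{0..k}-{i}. [:1, - (x^n):])) \<le> k" .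
  qed simp
  have degr: "degree r \<le> k" unfolding r_def
  proof -
    have "degree (\<Prod>n\<in>{1..k}. [:x^n, 1:]) \<le> sum (degree \<circ> (\<lambda>n. ([:x^n, 1:] :: real poly))) {1..k}"
      by (rule degree_prod_sum_le) simp
    also have "\<dots> \<le> sum (\<lambda>n. 1) {1..k}" by (rule sum_mono) simp
    finally show "degree (\<Prod>n\<in>{1..k}. [:x^n, 1:]) \<le> k" by simp
  qed
  define A where "A = (\<lambda>j. 1/x^j) ` {0..k}"
  have "inj_on (\<lambda>j. 1/x^j) {0..k}"
    by (rule inj_onI) (use x pow_inj in auto)
  hence cA: "card A = k + 1" unfolding A_def by (simp add: card_image)
  have "p = r"
  proof (rule poly_eqI_degree[of A])
    fix y assume "y \<in> A"
    then obtain j where j: "j \<le> k" "y = 1/x^j" unfolding A_def by auto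
    have "poly p y = (\<Sum>i\<le>k. if i = j then c j * (\<Prod>n\<in>{0..k}-{j}. (1 - 1/x^j * x^n)) else 0)"
      unfolding pe
    proof (rule sum.cong)
      fix i assume i: "i \<in> {..k}"
      show "c i * (\<Prod>n\<in>{0..k}-{i}. (1 - y * x^n)) = (if i = j then c j * (\<Prod>n\<in>{0..k}-{j}. (1 - 1/x^j * x^n)) else 0)"
      proof (cases "i = j")
        case True thus ?thesis using j by simp
      next
        case False
        hence "j \<in> {0..k}-{i}" using j by auto
        moreover have "1 - y * x^j = 0" using j x by simp
        ultimately have "(\<Prod>n\<in>{0..k}-{i}. (1 - y * x^n)) = 0"
          by (intro prod_zero) auto
        thus ?thesis using False by simp
      qed
    qed simp
    also have "\<dots> = c j * (\<Prod>n\<in>{0..k}-{j}. (1 - 1/x^j * x^n))" using j by simp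
    also have "\<dots> = poly r y" using hc[OF j(1)] re j by simp
    finally show "poly p y = poly r y" .
  qed (use cA degp degr in auto)
  thus ?thesis using pe re by metis
qed

lemma alg: fixes E D Q qa M N X Y Wi Pi Pki Pk qax qmxi qmxk A B s :: real
  assumes nz: "Wi \<noteq> 0" "Pi \<noteq> 0" "Pki \<noteq> 0" "Pk \<noteq> 0" "X \<noteq> 0" "Y \<noteq> 0" "qax \<noteq> 0"
    "qmxi \<noteq> 0" "qmxk \<noteq> 0" "A \<noteq> 0" "B \<noteq> 0" and ss: "s*s = 1"
  and hE: "E = N/X" and hD: "D = s*Pi*Pki/Wi" and hQ: "Q = s*Pk*Wi/(X*Y*Pki)"
  and hA: "qa = qax*A/B" and hM: "M = qmxi*N/qmxk"
  shows "E/D/B = qmxk/(A*Pk) * (M*qa*Q/(qmxi*qax*Pi)*Y)"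
proof -
  have s0: "s \<noteq> 0" using ss by auto
  have 1: "E/D/B = (N*Wi)/(s*(X*Pi*Pki*B))" unfolding hE hD using nz s0 by (simp add: field_simps)
  have 2: "qmxk/(A*Pk) * (M*qa*Q/(qmxi*qax*Pi)*Y) = (N*Wi)*s/(X*Pi*Pki*B)"
    unfolding hM hA hQ using nz s0 by (simp add: field_simps)
  have 3: "(N*Wi)/(s*(X*Pi*Pki*B)) = (N*Wi)*s/(X*Pi*Pki*B)"
  proof -
    have "(N*Wi)/(s*(X*Pi*Pki*B)) = (N*Wi)*(s*s)/(s*(X*Pi*Pki*B))" using ss by simp
    also have "\<dots> = (N*Wi)*s/(X*Pi*Pki*B)" using s0 by simp
    finally show ?thesis .
  qed
  show ?thesis using 1 2 3 by simp
qed

theorem mainTheorem2: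
  fixes q :: real and k :: nat
  assumes "0 < q" "q < 1" "1 \<le> k"
  shows "q ^ k * (\<Prod>n=1..k. (q ^ (2*n) + q ^ (2*k))) / (\<Prod>n=0..k. (1 - q ^ (2*n + 2*k)))
       = - (q ^ k * qpoch (- (q^2)) (q^2) k / ((q ^ (2*k) - 1) * qpoch (q^2) (q^2) k))
         * phi32 (- (q ^ (2*k+2))) (q ^ (2*k)) (inverse (q ^ (2*k))) (- (q^2)) (q ^ (2*k+2)) (q^2) (q^2)"
proof -
  define x where "x = q^2"
  define a where "a = x^k"
  have x0: "0 < x" using assms by (simp add: x_def)
  have x1: "x < 1" unfolding x_def using power_strict_mono[of q 1 2] assms by simp
  have a0: "0 < a" using x0 by (simp add: a_def)
  have a1: "a < 1" unfolding a_def using x0 x1 assms(3) by (simp add: power_less_one_iff)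
  have hn: "q^(2*n) = x^n" for n by (simp add: x_def power_mult)
  have ha: "q^(2*k) = a" by (simp add: a_def hn)
  have hnk: "q^(2*n+2*k) = a*x^n" for n by (simp add: power_add hn ha a_def)
  have hk2: "q^(2*k+2) = a*x" by (simp add: power_add ha x_def power2_eq_square)
  define S where "S i = qpoch (-(a*x)) x i * qpoch a x i * qpoch (inverse a) x i
           / (qpoch (-x) x i * qpoch (a*x) x i * qpoch x x i) * x^i" for i
  have phi: "phi32 (-(a*x)) a (inverse a) (-x) (a*x) x x = (\<Sum>i\<le>k. S i)"
    unfolding phi32_def S_def[symmetric]
  proof (rule suminf_finite)
    fix i assume "i \<notin> {..k}"
    hence "k \<in> {..<i}" by auto
    moreover have "1 - inverse a * x^k = 0" using x0 by (simp add: a_def)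
    ultimately have "qpoch (inverse a) x i = 0" unfolding qpoch_def by (intro prod_zero) auto
    thus "S i = 0" by (simp add: S_def)
  qed simp
  define E where "E j = (\<Prod>n=1..k. (x^n + 1/x^j))" for j
  define D where "D j = (\<Prod>n\<in>{0..k}-{j}. (1 - 1/x^j * x^n))" for j
  define c where "c j = E j / D j" for j
  have Dnz: "D j \<noteq> 0" for j
  proof -
    have "\<forall>n\<in>{0..k}-{j}. 1 - 1/x^j * x^n \<noteq> 0"
    proof
      fix n assume n: "n \<in> {0..k}-{j}"
      show "1 - 1/x^j * x^n \<noteq> 0"
      proof
        assume "1 - 1/x^j * x^n = 0"
        hence "x^n = x^j" using x0 by (simp add: field_simps)
        thus False using pow_inj[OF x0 x1] n by auto
      qed
    qed
    thus ?thesis unfolding D_def by (subst prod_zero_iff) auto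
  qed
  have interp': "(\<Sum>i\<le>k. c i * (\<Prod>n\<in>{0..k}-{i}. (1 - a * x^n))) = (\<Prod>n=1..k. (x^n + a))"
    by (rule interp[OF x0 x1]) (use Dnz in \<open>simp add: c_def E_def D_def\<close>)
  define Dall where "Dall = (\<Prod>n=0..k. (1 - a * x^n))"
  have ax: "a * x^i < 1" for i
  proof -
    have "a * x^i \<le> a" using a0 x0 x1 by (simp add: mult_left_le power_le_one)
    thus ?thesis using a1 by linarith
  qed
  have Dsplit: "Dall = (1 - a*x^i) * (\<Prod>n\<in>{0..k}-{i}. (1 - a * x^n))" if "i \<le> k" for i
    unfolding Dall_def using that by (subst prod.remove[of _ i]) auto
  have Dall0: "Dall \<noteq> 0"
  proof -
    have "1 - a*x^n \<noteq> 0" for n using ax[of n] by simp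
    thus ?thesis unfolding Dall_def by (subst prod_zero_iff) auto
  qed
  have frac: "(\<Prod>n=1..k. (x^n + a)) / Dall = (\<Sum>i\<le>k. c i / (1 - a*x^i))"
    unfolding interp'[symmetric] sum_divide_distrib
  proof (rule sum.cong)
    fix i assume "i \<in> {..k}"
    hence "i \<le> k" by simp
    have "1 - a*x^i \<noteq> 0" using ax[of i] by simp
    thus "c i * (\<Prod>n\<in>{0..k}-{i}. (1 - a * x^n)) / Dall = c i / (1 - a*x^i)"
      unfolding Dsplit[OF \<open>i \<le> k\<close>] using Dall0 Dsplit[OF \<open>i \<le> k\<close>] by (simp add: field_simps)
  qed simp
  define K where "K = qpoch (-x) x k / ((1-a) * qpoch x x k)"
  have ci: "c i / (1 - a*x^i) = K * S i" if "i \<le> k" for i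
  proof -
    have pq: "qpoch x x m > 0" for m by (rule qpoch_pos) (use x0 x1 in auto)
    have pmx: "qpoch (-x) x m > 0" for m by (rule qpoch_pos) (use x0 x1 in auto)
    have pax: "qpoch (a*x) x m > 0" for m by (rule qpoch_pos) (use x0 x1 ax[of 1] a0 in auto)
    have W0: "W x i \<noteq> 0" unfolding W_def using x0 by simp
    have ss: "(-1::real)^i * (-1)^i = 1" by (simp add: power_add[symmetric])
    have hE: "E i = qpoch (-(x^(i+1))) x k / x^(i*k)"
      using L2[OF x0, where k=k and i=i] x0 by (simp add: E_def field_simps)
    have hD: "D i = (-1)^i * qpoch x x i * qpoch x x (k-i) / W x i"
      using Dform[OF x0 that] W0 by (simp add: D_def field_simps)
    have hQ: "qpoch (inverse a) x i = (-1)^i * qpoch x x k * W x i / (x^(i*k) * x^i * qpoch x x (k-i))"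
      using Eform[OF x0 that] pq[of "k-i"] x0 by (simp add: a_def inverse_eq_divide field_simps)
    have hA: "qpoch a x i = qpoch (a*x) x i * (1-a) / (1 - a*x^i)"
      using qpoch_ratio[of a x i] ax[of i] by (simp add: field_simps)
    have hM: "qpoch (-(a*x)) x i = qpoch (-x) x i * qpoch (-(x^(i+1))) x k / qpoch (-x) x k"
    proof -
      have "qpoch (-x) x (k+i) = qpoch (-x) x k * qpoch (-(a*x)) x i"
        using qpoch_add[of "-x" x k i] by (simp add: a_def mult.commute)
      moreover have "qpoch (-x) x (i+k) = qpoch (-x) x i * qpoch (-(x^(i+1))) x k"
        using qpoch_add[of "-x" x i k] by (simp add: mult.commute)
      ultimately show ?thesis using pmx[of k] by (simp add: field_simps add.commute)
    qed
    show ?thesis unfolding c_def K_def S_def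
      by (rule alg[OF W0 _ _ _ _ _ _ _ _ _ _ ss hE hD hQ hA hM]) (use pq[of i] pq[of k] pq[of "k-i"] pmx[of i] pmx[of k] pax[of i] x0 a1 ax[of i] in auto)

  qed
  have "q ^ k * (\<Prod>n=1..k. (q ^ (2*n) + q ^ (2*k))) / (\<Prod>n=0..k. (1 - q ^ (2*n + 2*k)))
      = q^k * ((\<Prod>n=1..k. (x^n + a)) / Dall)"
    unfolding hn ha hnk Dall_def by (simp add: a_def)
  also have "\<dots> = q^k * (\<Sum>i\<le>k. K * S i)"
  proof -
    have "(\<Sum>i\<le>k. c i / (1 - a*x^i)) = (\<Sum>i\<le>k. K * S i)" by (rule sum.cong) (auto simp: ci)
    thus ?thesis by (simp only: frac)
  qed
  also have "\<dots> = q^k * K * (\<Sum>i\<le>k. S i)" by (simp add: sum_distrib_left mult.assoc)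
  also have "\<dots> = - (q ^ k * qpoch (- x) x k / ((a - 1) * qpoch x x k)) * phi32 (-(a*x)) a (inverse a) (-x) (a*x) x x"
  proof -
    have K': "K = - (qpoch (-x) x k / ((a-1)*qpoch x x k))"
      unfolding K_def by (metis minus_diff_eq mult_minus_left divide_minus_right)
    show ?thesis unfolding phi K' by simp
  qed
  finally show ?thesis unfolding hk2 ha x_def[symmetric] .
qed

end
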